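(* Let $X$ be a finite set with $|X|\ge 3$. If $\mathcal T$ is a minimum triplet cover for some tree $T\in B(X)$, then $\mu(\mathcal T)=2$.
   Context: A binary phylogenetic $X$-tree is an unrooted tree whose leaf set is $X$ and all of whose non-leaf vertices are unlabelled of degree three; $B(X)$ is the set of such trees. Pairs in $\binom{X}{2}$ are written $ab$, triples $abc$. Given $\mathcal T\subseteq\binom{X}{2}$, a triple $abc$ supports an interior vertex $v$ if $a,b,c$ lie one in each of the three components of $T$ minus $v$ and $ab,ac,bc\in\mathcal T$; $\mathcal T$ is a triplet cover for $T$ if every interior vertex is supported by some triple; it is minimum if no triplet cover for $T$ has smaller cardinality. The multiplicity $\mu_{\mathcal T}(x)$ of $x\in X$ is the number of elements of $\mathcal T$ containing $x$, and $\mu(\mathcal T)=\min\{\mu_{\mathcal T}(x):x\in X\}$. *)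

theory Defs
  imports Main
begin

text \<open>Graphs: vertex set V, edge set E of 2-element subsets of V.
  Leaves of the tree are the labels themselves, i.e. the leaf set is X \<subseteq> V.\<close>

definition adj :: "'a set set \<Rightarrow> ('a \<times> 'a) set" where
  "adj E = {(u, w). {u, w} \<in> E}"

definition is_graph :: "'a set \<Rightarrow> 'a set set \<Rightarrow> bool" where
  "is_graph V E \<longleftrightarrow> (\<forall>e\<in>E. e \<subseteq> V \<and> card e = 2)"

definition connected_graph :: "'a set \<Rightarrow> 'a set set \<Rightarrow> bool" where
  "connected_graph V E \<longleftrightarrow> (\<forall>u\<in>V. \<forall>w\<in>V. (u, w) \<in> (adj E)\<^sup>*)"

definition acyclic_graph :: "'a set set \<Rightarrow> bool" where
  "acyclic_graph E \<longleftrightarrow> (\<forall>e\<in>E. \<forall>u w. e = {u, w} \<longrightarrow> (u, w) \<notin> (adj (E - {e}))\<^sup>*)"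

definition is_tree :: "'a set \<Rightarrow> 'a set set \<Rightarrow> bool" where
  "is_tree V E \<longleftrightarrow> finite V \<and> V \<noteq> {} \<and> is_graph V E \<and> connected_graph V E \<and> acyclic_graph E"

definition degree :: "'a set set \<Rightarrow> 'a \<Rightarrow> nat" where
  "degree E v = card {e \<in> E. v \<in> e}"

definition binary_phylo_tree :: "'a set \<Rightarrow> 'a set \<Rightarrow> 'a set set \<Rightarrow> bool" where
  "binary_phylo_tree X V E \<longleftrightarrow> is_tree V E \<and> X \<subseteq> V \<and>
     (\<forall>v\<in>V. v \<in> X \<longleftrightarrow> degree E v \<le> 1) \<and>
     (\<forall>v\<in>V - X. degree E v = 3)"

definition conn_minus :: "'a set set \<Rightarrow> 'a \<Rightarrow> 'a \<Rightarrow> 'a \<Rightarrow> bool" where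
  "conn_minus E v a b \<longleftrightarrow> (a, b) \<in> (adj {e \<in> E. v \<notin> e})\<^sup>*"

definition pairs :: "'a set \<Rightarrow> 'a set set" where
  "pairs X = {p. p \<subseteq> X \<and> card p = 2}"

definition supports :: "'a set \<Rightarrow> 'a set set \<Rightarrow> 'a set set \<Rightarrow> 'a \<Rightarrow> 'a \<Rightarrow> 'a \<Rightarrow> 'a \<Rightarrow> bool" where
  "supports V E \<T> a b c v \<longleftrightarrow>
     a \<in> V - {v} \<and> b \<in> V - {v} \<and> c \<in> V - {v} \<and>
     \<not> conn_minus E v a b \<and> \<not> conn_minus E v a c \<and> \<not> conn_minus E v b c \<and>
     {a, b} \<in> \<T> \<and> {a, c} \<in> \<T> \<and> {b, c} \<in> \<T>"

definition triplet_cover :: "'a set \<Rightarrow> 'a set \<Rightarrow> 'a set set \<Rightarrow> 'a set set \<Rightarrow> bool" where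
  "triplet_cover X V E \<T> \<longleftrightarrow> \<T> \<subseteq> pairs X \<and>
     (\<forall>v\<in>V - X. \<exists>a b c. supports V E \<T> a b c v)"

definition min_triplet_cover :: "'a set \<Rightarrow> 'a set \<Rightarrow> 'a set set \<Rightarrow> 'a set set \<Rightarrow> bool" where
  "min_triplet_cover X V E \<T> \<longleftrightarrow> triplet_cover X V E \<T> \<and>
     (\<forall>\<T>'. triplet_cover X V E \<T>' \<longrightarrow> card \<T> \<le> card \<T>')"

definition multiplicity :: "'a set set \<Rightarrow> 'a \<Rightarrow> nat" where
  "multiplicity \<T> x = card {p \<in> \<T>. x \<in> p}"

definition mu :: "'a set \<Rightarrow> 'a set set \<Rightarrow> nat" where
  "mu X \<T> = Min (multiplicity \<T> ` X)"

end

theory Submission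
  imports Defs
begin

lemma adj_sym: "(a,b) \<in> adj F \<Longrightarrow> (b,a) \<in> adj F"
  by (simp add: adj_def insert_commute)

lemma rt_adj_sym: "(a,b) \<in> (adj F)\<^sup>* \<Longrightarrow> (b,a) \<in> (adj F)\<^sup>*"
proof (induction rule: rtrancl_induct)
  case base then show ?case by simp
next
  case (step y z)
  then show ?case by (meson adj_sym converse_rtrancl_into_rtrancl)
qed

lemma adj_mono: "F \<subseteq> G \<Longrightarrow> (adj F)\<^sup>* \<subseteq> (adj G)\<^sup>*"
  by (rule rtrancl_mono) (auto simp: adj_def)

locale bt =
  fixes X :: "'a set" and V :: "'a set" and E :: "'a set set"
  assumes bpt: "binary_phylo_tree X V E"
begin

lemma finV: "finite V" using bpt by (simp add: binary_phylo_tree_def is_tree_def)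
lemma XV: "X \<subseteq> V" using bpt by (simp add: binary_phylo_tree_def)
lemma edgeV: "e \<in> E \<Longrightarrow> e \<subseteq> V" using bpt by (auto simp: binary_phylo_tree_def is_tree_def is_graph_def)
lemma edge2: "e \<in> E \<Longrightarrow> card e = 2" using bpt by (auto simp: binary_phylo_tree_def is_tree_def is_graph_def)
lemma finE: "finite E"
proof -
  have "E \<subseteq> Pow V" using edgeV by auto
  then show ?thesis using finV by (meson finite_Pow_iff finite_subset)
qed
lemma connG: "u \<in> V \<Longrightarrow> w \<in> V \<Longrightarrow> (u,w) \<in> (adj E)\<^sup>*"
  using bpt by (simp add: binary_phylo_tree_def is_tree_def connected_graph_def)
lemma acyc: "e \<in> E \<Longrightarrow> e = {u,w} \<Longrightarrow> (u,w) \<notin> (adj (E - {e}))\<^sup>*"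
  using bpt by (simp add: binary_phylo_tree_def is_tree_def acyclic_graph_def)
lemma leafdeg: "v \<in> X \<Longrightarrow> degree E v \<le> 1"
  using bpt XV by (auto simp: binary_phylo_tree_def)
lemma intdeg: "v \<in> V - X \<Longrightarrow> degree E v = 3"
  using bpt by (auto simp: binary_phylo_tree_def)

lemma edge_neq: "{a,b} \<in> E \<Longrightarrow> a \<noteq> b"
  using edge2 by fastforce
lemma edge_in: "{a,b} \<in> E \<Longrightarrow> a \<in> V \<and> b \<in> V"
  using edgeV by auto

abbreviation cm where "cm v a b \<equiv> conn_minus E v a b"

lemma cm_refl: "cm v a a" by (simp add: conn_minus_def)
lemma cm_sym: "cm v a b \<Longrightarrow> cm v b a" by (simp add: conn_minus_def rt_adj_sym)
lemma cm_trans: "cm v a b \<Longrightarrow> cm v b c \<Longrightarrow> cm v a c" by (simp add: conn_minus_def)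
lemma cm_step: "{a,b} \<in> E \<Longrightarrow> v \<noteq> a \<Longrightarrow> v \<noteq> b \<Longrightarrow> cm v a b"
  by (simp add: conn_minus_def adj_def r_into_rtrancl)
lemma cm_self: "cm v v a \<Longrightarrow> a = v"
  unfolding conn_minus_def
  by (erule converse_rtranclE) (auto simp: adj_def)
lemma cm_self': "cm v a v \<Longrightarrow> a = v"
  using cm_self cm_sym by blast

lemma K: assumes "u \<in> V" "v \<in> V" "a \<in> V" "u \<noteq> v" shows "cm u a v \<or> cm v a u"
proof -
  have "(a,v) \<in> (adj E)\<^sup>*" using connG assms by auto
  then show ?thesis
  proof (induction rule: converse_rtrancl_induct)
    case base then show ?case by (simp add: cm_refl)
  next
    case (step y z)
    have yz: "{y,z} \<in> E" using step.hyps(1) by (simp add: adj_def)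
    from step.IH show ?case
    proof
      assume h: "cm u z v"
      show ?thesis
      proof (cases "y = u")
        case True then show ?thesis by (simp add: cm_refl)
      next
        case False
        have "z \<noteq> u" using h cm_self assms(4) by blast
        then have "cm u y z" using cm_step[OF yz] False by auto
        then show ?thesis using h cm_trans by blast
      qed
    next
      assume h: "cm v z u"
      show ?thesis
      proof (cases "y = v")
        case True then show ?thesis by (simp add: cm_refl)
      next
        case False
        have "z \<noteq> v" using h cm_self assms(4) by blast
        then have "cm v y z" using cm_step[OF yz] False by auto
        then show ?thesis using h cm_trans by blast
      qed
    qed
  qed
qed

lemma B1: assumes "v \<in> V" "a \<in> V" "a \<noteq> v" shows "\<exists>n. {v,n} \<in> E \<and> cm v a n"
proof -
  have "(a,v) \<in> (adj E)\<^sup>*" using connG assms by auto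
  then have "a = v \<or> (\<exists>n. {v,n} \<in> E \<and> cm v a n)"
  proof (induction rule: converse_rtrancl_induct)
    case base then show ?case by simp
  next
    case (step y z)
    have yz: "{y,z} \<in> E" using step.hyps(1) by (simp add: adj_def)
    show ?case
    proof (cases "y = v")
      case True then show ?thesis by simp
    next
      case False
      from step.IH show ?thesis
      proof
        assume "z = v"
        then have "{v,y} \<in> E" using yz by (simp add: insert_commute)
        then show ?thesis using cm_refl by blast
      next
        assume "\<exists>n. {v,n} \<in> E \<and> cm v z n"
        then obtain n where n: "{v,n} \<in> E" "cm v z n" by blast
        have "z \<noteq> v" using n edge_neq cm_self by metis
        then have "cm v y z" using cm_step[OF yz] False by auto
        then show ?thesis using n cm_trans by blast
      qed
    qed
  qed
  then show ?thesis using assms by blast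
qed

lemma cycle_contra: assumes e: "{v,n} \<in> E" and p: "(n,v) \<in> (adj (E - {{v,n}}))\<^sup>*" shows False
proof -
  have "(v,n) \<in> (adj (E - {{v,n}}))\<^sup>*" by (rule rt_adj_sym[OF p])
  then show False using acyc[OF e refl] by simp
qed

lemma B2: assumes "{v,n1} \<in> E" "{v,n2} \<in> E" "n1 \<noteq> n2" "cm v a n1" "cm v a n2" shows False
proof -
  have c: "cm v n1 n2" using assms cm_sym cm_trans by blast
  have sub: "{e \<in> E. v \<notin> e} \<subseteq> E - {{v,n1}}" by auto
  have "(n1,n2) \<in> (adj (E - {{v,n1}}))\<^sup>*"
    using c adj_mono[OF sub] unfolding conn_minus_def by blast
  moreover have "(n2,v) \<in> adj (E - {{v,n1}})"
    using assms(2,3) edge_neq[OF assms(2)] by (auto simp: adj_def insert_commute doubleton_eq_iff)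
  ultimately have "(n1,v) \<in> (adj (E - {{v,n1}}))\<^sup>*" by (rule rtrancl_into_rtrancl)
  then show False using cycle_contra assms(1) by blast
qed

lemma B3: assumes e: "{v,n} \<in> E" and h1: "cm v a n" and h2: "cm n a v" shows False
proof -
  have s1: "{e \<in> E. v \<notin> e} \<subseteq> E - {{v,n}}" by auto
  have s2: "{e \<in> E. n \<notin> e} \<subseteq> E - {{v,n}}" by auto
  have "(n,a) \<in> (adj (E - {{v,n}}))\<^sup>*"
    using cm_sym[OF h1] adj_mono[OF s1] unfolding conn_minus_def by blast
  moreover have "(a,v) \<in> (adj (E - {{v,n}}))\<^sup>*"
    using h2 adj_mono[OF s2] unfolding conn_minus_def by blast
  ultimately show False using cycle_contra e by (meson rtrancl_trans)
qed

lemma leaf_nb_unique: assumes "n \<in> X" "{n,p} \<in> E" "{n,q} \<in> E" shows "p = q"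
proof -
  have fin: "finite {e \<in> E. n \<in> e}" using finE by simp
  have "card {e \<in> E. n \<in> e} \<le> 1" using leafdeg assms(1) by (simp add: degree_def)
  then have "{n,p} = {n,q}" using fin assms(2,3) card_le_Suc0_iff_eq[OF fin] by auto
  then show ?thesis using edge_neq assms(2,3) by (auto simp: doubleton_eq_iff)
qed

lemma B4: assumes e: "{v,n} \<in> E" and nX: "n \<in> X" and h: "cm v a n" shows "a = n"
  using h unfolding conn_minus_def
proof (cases rule: rtranclE)
  case base then show ?thesis by simp
next
  case (step b)
  then have "{b,n} \<in> E" "v \<notin> {b,n}" by (auto simp: adj_def)
  moreover have "{n,b} \<in> E" using calculation by (simp add: insert_commute)
  moreover have "{n,v} \<in> E" using e by (simp add: insert_commute)
  ultimately show ?thesis using leaf_nb_unique[OF nX] by blast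
qed

lemma B5: assumes "v \<in> V - X" shows "card {n. {v,n} \<in> E} = 3"
proof -
  have "{e \<in> E. v \<in> e} = (\<lambda>n. {v,n}) ` {n. {v,n} \<in> E}"
  proof
    show "{e \<in> E. v \<in> e} \<subseteq> (\<lambda>n. {v,n}) ` {n. {v,n} \<in> E}"
    proof
      fix e assume "e \<in> {e \<in> E. v \<in> e}"
      then have e: "e \<in> E" "v \<in> e" by auto
      then obtain a b where ab: "e = {a,b}" "a \<noteq> b" using edge2 card_2_iff by metis
      then have "e = {v, (if a = v then b else a)}" using e by auto
      then show "e \<in> (\<lambda>n. {v,n}) ` {n. {v,n} \<in> E}" using e by auto
    qed
  qed auto
  moreover have "inj_on (\<lambda>n. {v,n}) {n. {v,n} \<in> E}"
    by (auto simp: inj_on_def doubleton_eq_iff dest: edge_neq)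
  ultimately have "card {e \<in> E. v \<in> e} = card {n. {v,n} \<in> E}"
    by (simp add: card_image)
  then show ?thesis using intdeg assms by (simp add: degree_def)
qed

lemma four: assumes v: "v \<in> V - X" and ab: "a \<in> V" "b \<in> V" "c \<in> V" "d \<in> V"
  and nv: "a \<noteq> v" "b \<noteq> v" "c \<noteq> v" "d \<noteq> v"
  and s: "\<not> cm v a b" "\<not> cm v a c" "\<not> cm v a d" "\<not> cm v b c" "\<not> cm v b d" "\<not> cm v c d"
  shows False
proof -
  have vV: "v \<in> V" using v by auto
  obtain na where na: "{v,na} \<in> E" "cm v a na" using B1[OF vV ab(1) nv(1)] by blast
  obtain nb where nb: "{v,nb} \<in> E" "cm v b nb" using B1[OF vV ab(2) nv(2)] by blast
  obtain nc where nc: "{v,nc} \<in> E" "cm v c nc" using B1[OF vV ab(3) nv(3)] by blast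
  obtain nd where nd: "{v,nd} \<in> E" "cm v d nd" using B1[OF vV ab(4) nv(4)] by blast
  have d: "na \<noteq> nb" "na \<noteq> nc" "na \<noteq> nd" "nb \<noteq> nc" "nb \<noteq> nd" "nc \<noteq> nd"
    using na nb nc nd s cm_sym cm_trans by metis+
  have sub: "{na,nb,nc,nd} \<subseteq> {n. {v,n} \<in> E}" using na nb nc nd by auto
  have fin: "finite {n. {v,n} \<in> E}"
  proof -
    have "{n. {v,n} \<in> E} \<subseteq> V" using edge_in by blast
    then show ?thesis using finV finite_subset by blast
  qed
  have "card {na,nb,nc,nd} = 4" using d by auto
  then have "4 \<le> card {n. {v,n} \<in> E}" using card_mono[OF fin sub] by simp
  then show False using B5[OF v] by simp
qed

end

context bt begin

definition sep3 where "sep3 v a b c \<longleftrightarrow> \<not> cm v a b \<and> \<not> cm v a c \<and> \<not> cm v b c"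
definition MM where "MM Y = {v \<in> V - X. \<exists>a\<in>Y. \<exists>b\<in>Y. \<exists>c\<in>Y. sep3 v a b c}"
definition cov where "cov Y T \<longleftrightarrow> T \<subseteq> pairs Y \<and>
   (\<forall>v\<in>MM Y. \<exists>a b c. {a,b} \<in> T \<and> {a,c} \<in> T \<and> {b,c} \<in> T \<and> sep3 v a b c)"
definition cherry where "cherry Y x y u \<longleftrightarrow> u \<in> V - X \<and> x \<in> Y \<and> y \<in> Y \<and> x \<noteq> y \<and>
   (\<forall>a\<in>Y. a \<noteq> x \<longrightarrow> \<not> cm u x a) \<and> (\<forall>a\<in>Y. a \<noteq> y \<longrightarrow> \<not> cm u y a) \<and>
   (\<forall>a\<in>Y. \<forall>b\<in>Y. a \<notin> {x,y} \<longrightarrow> b \<notin> {x,y} \<longrightarrow> cm u a b)"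

lemma sep3_dist: "sep3 v a b c \<Longrightarrow> a \<noteq> b \<and> a \<noteq> c \<and> b \<noteq> c"
  by (auto simp: sep3_def cm_refl)

lemma MM_mono: "Y \<subseteq> Z \<Longrightarrow> MM Y \<subseteq> MM Z"
  by (auto simp: MM_def)

lemma cm_V: assumes "cm v a n" "n \<in> V" shows "a \<in> V"
  using assms(1) unfolding conn_minus_def
proof (cases rule: converse_rtranclE)
  case base then show ?thesis using assms by simp
next
  case (step b)
  then have "{a,b} \<in> E" by (auto simp: adj_def)
  then show ?thesis using edge_in by blast
qed

lemma cherry_ex: assumes fY: "finite Y" and YX: "Y \<subseteq> X" and c3: "3 \<le> card Y"
  shows "\<exists>x y u. cherry Y x y u"
proof -
  define P where "P = (\<lambda>(v,n). v \<in> V \<and> {v,n} \<in> E \<and> 2 \<le> card ({a. cm v a n} \<inter> Y) \<and> \<not> Y \<subseteq> {a. cm v a n})"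
  define m where "m = (\<lambda>(v,n). card {a. cm v a n})"
  have YV: "Y \<subseteq> V" using YX XV by auto
  obtain y0 where y0: "y0 \<in> Y" using c3 by fastforce
  obtain y1 where y1: "y1 \<in> Y" "y1 \<noteq> y0"
  proof -
    have "card (Y - {y0}) \<ge> 2" using c3 y0 fY by simp
    then have "Y - {y0} \<noteq> {}" by (metis card.empty not_numeral_le_zero)
    then show ?thesis using that by blast
  qed
  have "(y0,y1) \<in> (adj E)\<^sup>*" using connG YV y0 y1 by auto
  then obtain p where p: "{y0,p} \<in> E"
    by (cases rule: converse_rtranclE) (use y1 in \<open>auto simp: adj_def\<close>)
  have y0X: "y0 \<in> X" using y0 YX by auto
  have sub0: "Y - {y0} \<subseteq> {a. cm y0 a p} \<inter> Y"
  proof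
    fix a assume a: "a \<in> Y - {y0}"
    then obtain n where n: "{y0,n} \<in> E" "cm y0 a n" using B1[of y0 a] YV y0 by auto
    have "n = p" using leaf_nb_unique[OF y0X n(1) p] .
    then show "a \<in> {a. cm y0 a p} \<inter> Y" using n a by auto
  qed
  have "2 \<le> card (Y - {y0})" using c3 y0 fY by simp
  also have "\<dots> \<le> card ({a. cm y0 a p} \<inter> Y)" using card_mono[OF _ sub0] fY by simp
  finally have c0: "2 \<le> card ({a. cm y0 a p} \<inter> Y)" .
  have "\<not> cm y0 y0 p" using cm_self edge_neq p by metis
  then have "P (y0,p)" unfolding P_def using c0 p y0 YV by auto
  then obtain vn where vn: "P vn" "\<forall>w. P w \<longrightarrow> m vn \<le> m w"
    using ex_has_least_nat[of P "(y0,p)" m] by blast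
  obtain v n where vneq: "vn = (v,n)" by fastforce
  have Pvn: "v \<in> V" "{v,n} \<in> E" "2 \<le> card ({a. cm v a n} \<inter> Y)" "\<not> Y \<subseteq> {a. cm v a n}"
    using vn(1) vneq unfolding P_def by auto
  have minl: "\<And>v' n'. P (v',n') \<Longrightarrow> card {a. cm v a n} \<le> card {a. cm v' a n'}"
    using vn(2) vneq unfolding m_def by fastforce
  have nV: "n \<in> V" using Pvn(2) edge_in by blast
  have finBr: "\<And>w k. k \<in> V \<Longrightarrow> finite {a. cm w a k}"
  proof -
    fix w k assume "k \<in> V"
    then have "{a. cm w a k} \<subseteq> V" using cm_V by blast
    then show "finite {a. cm w a k}" using finV finite_subset by blast
  qed
  have nX: "n \<notin> X"
  proof
    assume "n \<in> X"
    then have "{a. cm v a n} \<inter> Y \<subseteq> {n}" using B4[OF Pvn(2)] by auto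
    then have "card ({a. cm v a n} \<inter> Y) \<le> 1" by (metis card.empty card.insert empty_iff finite.intros(1) card_mono finite.emptyI le_SucI le_refl subset_singletonD zero_le_one One_nat_def)
    then show False using Pvn(3) by simp
  qed
  have nVX: "n \<in> V - X" using nV nX by simp
  have nvE: "{n,v} \<in> E" using Pvn(2) by (simp add: insert_commute)
  have finN: "finite {k. {n,k} \<in> E}"
  proof -
    have "{k. {n,k} \<in> E} \<subseteq> V" using edge_in by blast
    then show ?thesis using finV finite_subset by blast
  qed
  have "card ({k. {n,k} \<in> E} - {v}) = 2" using B5[OF nVX] nvE finN by simp
  then obtain m1 m2 where m12: "{k. {n,k} \<in> E} - {v} = {m1,m2}" "m1 \<noteq> m2"
    by (auto simp: card_2_iff)
  have m1E: "{n,m1} \<in> E" "m1 \<noteq> v" and m2E: "{n,m2} \<in> E" "m2 \<noteq> v" using m12 by blast+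
  have Nn: "\<And>k. {n,k} \<in> E \<Longrightarrow> k = v \<or> k = m1 \<or> k = m2" using m12 by blast
  have vnv: "v \<noteq> n" using Pvn(2) edge_neq by blast
  have brsub: "\<And>mi. {n,mi} \<in> E \<Longrightarrow> mi \<noteq> v \<Longrightarrow> {a. cm n a mi} \<subset> {a. cm v a n}"
  proof -
    fix mi assume mi: "{n,mi} \<in> E" "mi \<noteq> v"
    have "{a. cm n a mi} \<subseteq> {a. cm v a n}"
    proof
      fix b assume "b \<in> {a. cm n a mi}"
      then have b: "cm n b mi" by simp
      have miV: "mi \<in> V" using mi edge_in by blast
      have bV: "b \<in> V" using cm_V[OF b miV] .
      have "\<not> cm n b v" using B2[OF mi(1) nvE mi(2) b] by blast
      then show "b \<in> {a. cm v a n}" using K[OF nV Pvn(1) bV] vnv by auto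
    qed
    moreover have "n \<notin> {a. cm n a mi}" using cm_self edge_neq mi(1) by fastforce
    moreover have "n \<in> {a. cm v a n}" by (simp add: cm_refl)
    ultimately show "{a. cm n a mi} \<subset> {a. cm v a n}" by blast
  qed
  have small: "\<And>mi. {n,mi} \<in> E \<Longrightarrow> mi \<noteq> v \<Longrightarrow> card ({a. cm n a mi} \<inter> Y) \<le> 1"
  proof (rule ccontr)
    fix mi assume mi: "{n,mi} \<in> E" "mi \<noteq> v" and c: "\<not> card ({a. cm n a mi} \<inter> Y) \<le> 1"
    have ps: "{a. cm n a mi} \<subset> {a. cm v a n}" using brsub[OF mi] .
    have "P (n,mi)" unfolding P_def using nV mi c ps Pvn(4) by auto
    then have "card {a. cm v a n} \<le> card {a. cm n a mi}" using minl by blast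
    moreover have "card {a. cm n a mi} < card {a. cm v a n}"
      using psubset_card_mono[OF finBr[OF nV] ps] .
    ultimately show False by simp
  qed
  have cover: "{a. cm v a n} \<inter> Y \<subseteq> ({a. cm n a m1} \<inter> Y) \<union> ({a. cm n a m2} \<inter> Y)"
  proof
    fix a assume a: "a \<in> {a. cm v a n} \<inter> Y"
    have aV: "a \<in> V" using a YV by auto
    have an: "a \<noteq> n" using a nX YX by auto
    obtain k where k: "{n,k} \<in> E" "cm n a k" using B1[OF nV aV an] by blast
    have "k \<noteq> v" using B3[OF Pvn(2)] a k(2) by auto
    then have "k = m1 \<or> k = m2" using Nn[OF k(1)] by blast
    then show "a \<in> ({a. cm n a m1} \<inter> Y) \<union> ({a. cm n a m2} \<inter> Y)" using k a by auto
  qed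
  have s1: "card ({a. cm n a m1} \<inter> Y) \<le> 1" using small m1E by blast
  have s2: "card ({a. cm n a m2} \<inter> Y) \<le> 1" using small m2E by blast
  have "2 \<le> card (({a. cm n a m1} \<inter> Y) \<union> ({a. cm n a m2} \<inter> Y))"
    using Pvn(3) card_mono[OF _ cover] fY by (meson finite_Int finite_UnI le_trans)
  also have "\<dots> \<le> card ({a. cm n a m1} \<inter> Y) + card ({a. cm n a m2} \<inter> Y)" by (rule card_Un_le)
  finally have "card ({a. cm n a m1} \<inter> Y) = 1" "card ({a. cm n a m2} \<inter> Y) = 1" using s1 s2 by auto
  then obtain x y where x: "{a. cm n a m1} \<inter> Y = {x}" and y: "{a. cm n a m2} \<inter> Y = {y}"
    by (meson card_1_singletonE)
  have xY: "x \<in> Y" "cm n x m1" using x by auto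
  have yY: "y \<in> Y" "cm n y m2" using y by auto
  have xy: "x \<noteq> y" using B2[OF m1E(1) m2E(1) m12(2)] xY yY by blast
  have "cherry Y x y n"
    unfolding cherry_def
  proof (intro conjI ballI impI)
    show "n \<in> V - X" using nVX .
    show "x \<in> Y" "y \<in> Y" "x \<noteq> y" using xY yY xy by auto
  next
    fix a assume a: "a \<in> Y" "a \<noteq> x"
    show "\<not> cm n x a"
    proof
      assume "cm n x a"
      then have "cm n a m1" using xY cm_sym cm_trans by blast
      then show False using x a by auto
    qed
  next
    fix a assume a: "a \<in> Y" "a \<noteq> y"
    show "\<not> cm n y a"
    proof
      assume "cm n y a"
      then have "cm n a m2" using yY cm_sym cm_trans by blast
      then show False using y a by auto
    qed
  next
    fix a b assume a: "a \<in> Y" and b: "b \<in> Y" and na: "a \<notin> {x,y}" and nb: "b \<notin> {x,y}"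
    have tov: "\<And>c. c \<in> Y \<Longrightarrow> c \<notin> {x,y} \<Longrightarrow> cm n c v"
    proof -
      fix c assume c: "c \<in> Y" "c \<notin> {x,y}"
      have cV: "c \<in> V" using c YV by auto
      have cn: "c \<noteq> n" using c nX YX by auto
      obtain k where k: "{n,k} \<in> E" "cm n c k" using B1[OF nV cV cn] by blast
      have "k \<noteq> m1" using k x c by auto
      moreover have "k \<noteq> m2" using k y c by auto
      ultimately have "k = v" using Nn[OF k(1)] by blast
      then show "cm n c v" using k by simp
    qed
    show "cm n a b" using tov[OF a na] tov[OF b nb] cm_sym cm_trans by blast
  qed
  then show ?thesis by blast
qed

lemma cherry_M: assumes ch: "cherry Y x y u" and fY: "finite Y" and c3: "3 \<le> card Y"
  shows "u \<in> MM Y"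
proof -
  have "card (Y - {x,y}) \<ge> 1" using ch c3 fY by (auto simp: cherry_def card_Diff_subset)
  then have "Y - {x,y} \<noteq> {}" by (metis card.empty not_one_le_zero)
  then obtain z where z: "z \<in> Y" "z \<notin> {x,y}" by blast
  have "sep3 u x y z" using ch z by (auto simp: cherry_def sep3_def)
  then show ?thesis using ch z by (auto simp: MM_def cherry_def)
qed

lemma one_class: assumes v: "v \<in> MM Y" and w: "\<And>a. a \<in> Y \<Longrightarrow> a \<noteq> w \<Longrightarrow> cm v a u"
  shows False
proof -
  obtain a b c where abc: "a \<in> Y" "b \<in> Y" "c \<in> Y" "sep3 v a b c" using v by (auto simp: MM_def)
  show False
  proof (cases "a = w")
    case True
    then have "b \<noteq> w" "c \<noteq> w" using sep3_dist abc(4) by auto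
    then show False using w abc cm_sym cm_trans by (meson sep3_def)
  next
    case False
    then show False
    proof (cases "b = w")
      case True
      then have "c \<noteq> w" using sep3_dist abc(4) by auto
      then show False using False w abc cm_sym cm_trans by (meson sep3_def)
    next
      case False2: False
      then show False using False w abc cm_sym cm_trans by (meson sep3_def)
    qed
  qed
qed

lemma cherry_other: assumes ch: "cherry Y x y u" and YX: "Y \<subseteq> X" and v: "v \<in> MM Y" and vu: "v \<noteq> u"
  shows "cm v x y"
proof -
  have uV: "u \<in> V" and vV: "v \<in> V" using ch v by (auto simp: cherry_def MM_def)
  have YV: "Y \<subseteq> V" using YX XV by auto
  have xV: "x \<in> V" and yV: "y \<in> V" using ch YV by (auto simp: cherry_def)
  have gen: "\<And>w. w \<in> Y \<Longrightarrow> (\<forall>a\<in>Y. a \<noteq> w \<longrightarrow> \<not> cm u w a) \<Longrightarrow> cm v w u"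
  proof (rule ccontr)
    fix w assume w: "w \<in> Y" "\<forall>a\<in>Y. a \<noteq> w \<longrightarrow> \<not> cm u w a" and n: "\<not> cm v w u"
    have wV: "w \<in> V" using w YV by auto
    have wu: "cm u w v" using K[OF uV vV wV] vu n by auto
    have "\<And>a. a \<in> Y \<Longrightarrow> a \<noteq> w \<Longrightarrow> cm v a u"
    proof -
      fix a assume a: "a \<in> Y" "a \<noteq> w"
      have aV: "a \<in> V" using a YV by auto
      have "\<not> cm u a v" using wu w(2) a cm_sym cm_trans by blast
      then show "cm v a u" using K[OF uV vV aV] vu by auto
    qed
    then show False using one_class[OF v] by blast
  qed
  have "cm v x u" using gen ch by (auto simp: cherry_def)
  moreover have "cm v y u" using gen ch by (auto simp: cherry_def)
  ultimately show ?thesis using cm_sym cm_trans by blast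
qed

lemma cherry_Msub: assumes ch: "cherry Y x y u" and v: "v \<in> MM (Y - {x})"
  shows "v \<in> MM Y \<and> v \<noteq> u"
proof
  show "v \<in> MM Y" using v MM_mono[of "Y - {x}" Y] by auto
  show "v \<noteq> u"
  proof
    assume vu: "v = u"
    obtain a b c where abc: "a \<in> Y - {x}" "b \<in> Y - {x}" "c \<in> Y - {x}" "sep3 u a b c"
      using v vu by (auto simp: MM_def)
    have d: "a \<noteq> b" "a \<noteq> c" "b \<noteq> c" using sep3_dist abc(4) by auto
    have R: "\<And>p q. p \<in> Y - {x} \<Longrightarrow> q \<in> Y - {x} \<Longrightarrow> p \<noteq> y \<Longrightarrow> q \<noteq> y \<Longrightarrow> cm u p q"
      using ch by (auto simp: cherry_def)
    show False using R abc d by (metis sep3_def)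
  qed
qed

lemma RP: assumes "finite Y" "Y \<subseteq> X" "3 \<le> card Y" "w \<in> Y"
  shows "\<exists>v\<in>MM Y. \<forall>a\<in>Y. a \<noteq> w \<longrightarrow> \<not> cm v w a"
  using assms
proof (induction "card Y" arbitrary: Y rule: less_induct)
  case less
  obtain x y u where ch: "cherry Y x y u" using cherry_ex less.prems by blast
  have uM: "u \<in> MM Y" using cherry_M[OF ch] less.prems by blast
  show ?case
  proof (cases "w = x \<or> w = y")
    case True
    then show ?thesis using ch uM by (auto simp: cherry_def)
  next
    case False
    show ?thesis
    proof (cases "Y - {x,y,w} = {}")
      case True
      have "\<forall>a\<in>Y. a \<noteq> w \<longrightarrow> \<not> cm u w a"
      proof (intro ballI impI)
        fix a assume a: "a \<in> Y" "a \<noteq> w"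
        then have "a = x \<or> a = y" using True by auto
        then show "\<not> cm u w a" using ch False less.prems(4) cm_sym by (auto simp: cherry_def)
      qed
      then show ?thesis using uM by blast
    next
      case ne: False
      then obtain q where q: "q \<in> Y" "q \<notin> {x,y,w}" by blast
      have xY: "x \<in> Y" and yY: "y \<in> Y" and xy: "x \<noteq> y" using ch by (auto simp: cherry_def)
      have "{x,y,w,q} \<subseteq> Y" using xY yY q less.prems(4) by auto
      then have "card {x,y,w,q} \<le> card Y" using card_mono less.prems(1) by blast
      moreover have "card {x,y,w,q} = 4" using False q xy by auto
      ultimately have c4: "4 \<le> card Y" by simp
      have cY': "card (Y - {x}) = card Y - 1" using xY less.prems(1) by simp
      have "\<exists>v\<in>MM (Y - {x}). \<forall>a\<in>Y - {x}. a \<noteq> w \<longrightarrow> \<not> cm v w a"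
        apply (rule less.hyps[of "Y - {x}"])
        using cY' c4 less.prems False by auto
      then obtain v where v: "v \<in> MM (Y - {x})" "\<forall>a\<in>Y - {x}. a \<noteq> w \<longrightarrow> \<not> cm v w a" by blast
      have vM: "v \<in> MM Y" "v \<noteq> u" using cherry_Msub[OF ch v(1)] by auto
      have cxy: "cm v x y" using cherry_other[OF ch less.prems(2) vM] .
      have "\<not> cm v w y" using v(2) yY xy False by auto
      then have "\<not> cm v w x" using cxy cm_trans by blast
      then have "\<forall>a\<in>Y. a \<noteq> w \<longrightarrow> \<not> cm v w a" using v(2) by auto
      then show ?thesis using vM by blast
    qed
  qed
qed

lemma med_unique: assumes "v \<in> V" "v' \<in> V" "a \<in> V" "b \<in> V" "c \<in> V"
  "sep3 v a b c" "sep3 v' a b c" shows "v = v'"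
proof (rule ccontr)
  assume n: "v \<noteq> v'"
  have ka: "cm v a v' \<or> cm v' a v" using K[OF assms(1,2,3) n] .
  have kb: "cm v b v' \<or> cm v' b v" using K[OF assms(1,2,4) n] .
  have kc: "cm v c v' \<or> cm v' c v" using K[OF assms(1,2,5) n] .
  show False using ka kb kc assms(6,7) unfolding sep3_def by (meson cm_sym cm_trans)
qed

lemma four_X: assumes "v \<in> V - X" "a \<in> X" "b \<in> X" "c \<in> X" "d \<in> X"
  "\<not> cm v a b" "\<not> cm v a c" "\<not> cm v a d" "\<not> cm v b c" "\<not> cm v b d" "\<not> cm v c d"
  shows False
  using four[OF assms(1) _ _ _ _ _ _ _ _ assms(6-11)] assms(1-5) XV by blast

end

lemma pairs_fin: "finite Y \<Longrightarrow> finite (pairs Y)"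
proof -
  assume "finite Y"
  moreover have "pairs Y \<subseteq> Pow Y" by (auto simp: pairs_def)
  ultimately show ?thesis by (meson finite_Pow_iff finite_subset)
qed

lemma pairs_dbl: "{a,b} \<in> pairs Y \<longleftrightarrow> a \<in> Y \<and> b \<in> Y \<and> a \<noteq> b"
  by (auto simp: pairs_def card_2_iff)

lemma pairs_elem: "p \<in> pairs Y \<Longrightarrow> \<exists>a b. p = {a,b} \<and> a \<noteq> b \<and> a \<in> Y \<and> b \<in> Y"
  by (auto simp: pairs_def card_2_iff)

lemma tri_pairs: "{a,b}\<in>T \<Longrightarrow> {a,c}\<in>T \<Longrightarrow> {b,c}\<in>T \<Longrightarrow> p \<in> {a,b,c} \<Longrightarrow> q \<in> {a,b,c} \<Longrightarrow> p \<noteq> q \<Longrightarrow> {p,q} \<in> T"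
  by (auto simp: insert_commute)

context bt begin

lemma tri_sep: "sep3 v a b c \<Longrightarrow> p \<in> {a,b,c} \<Longrightarrow> q \<in> {a,b,c} \<Longrightarrow> p \<noteq> q \<Longrightarrow> \<not> cm v p q"
  by (auto simp: sep3_def dest: cm_sym)

lemma cov_fin: "cov Y T \<Longrightarrow> finite Y \<Longrightarrow> finite T"
  using pairs_fin finite_subset by (auto simp: cov_def)

lemma cov_mem: "cov Y T \<Longrightarrow> {a,b} \<in> T \<Longrightarrow> a \<in> Y \<and> b \<in> Y \<and> a \<noteq> b"
proof -
  assume "cov Y T" "{a,b} \<in> T"
  then have "{a,b} \<in> pairs Y" by (auto simp: cov_def)
  then show ?thesis using pairs_dbl[of a b Y] by simp
qed

lemma cov_pair: "cov Y T \<Longrightarrow> p \<in> T \<Longrightarrow> \<exists>a b. p = {a,b} \<and> a \<noteq> b"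
proof -
  assume "cov Y T" "p \<in> T"
  then have "p \<in> pairs Y" by (auto simp: cov_def)
  then show ?thesis using pairs_elem[of p Y] by auto
qed

lemma cherry_tri: assumes ch: "cherry Y x y u" and cv: "cov Y T" and fY: "finite Y" and c3: "3 \<le> card Y"
  shows "\<exists>z. z \<in> Y \<and> z \<notin> {x,y} \<and> {x,y} \<in> T \<and> {x,z} \<in> T \<and> {y,z} \<in> T"
proof -
  have uM: "u \<in> MM Y" using cherry_M[OF ch fY c3] .
  then obtain a b c where abc: "{a,b} \<in> T" "{a,c} \<in> T" "{b,c} \<in> T" "sep3 u a b c"
    using cv by (auto simp: cov_def)
  have inY: "a \<in> Y" "b \<in> Y" "c \<in> Y" using abc cov_mem[OF cv] by auto
  have d: "a \<noteq> b" "a \<noteq> c" "b \<noteq> c" using sep3_dist[OF abc(4)] by auto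
  have R: "\<And>p q. p \<in> Y \<Longrightarrow> q \<in> Y \<Longrightarrow> p \<notin> {x,y} \<Longrightarrow> q \<notin> {x,y} \<Longrightarrow> cm u p q"
    using ch by (auto simp: cherry_def)
  have xin: "x \<in> {a,b,c}"
  proof (rule ccontr)
    assume xn: "x \<notin> {a,b,c}"
    have "(a \<notin> {x,y} \<and> b \<notin> {x,y}) \<or> (a \<notin> {x,y} \<and> c \<notin> {x,y}) \<or> (b \<notin> {x,y} \<and> c \<notin> {x,y})"
      using xn d by auto
    then show False using R inY abc(4) unfolding sep3_def by blast
  qed
  have yin: "y \<in> {a,b,c}"
  proof (rule ccontr)
    assume yn: "y \<notin> {a,b,c}"
    have "(a \<notin> {x,y} \<and> b \<notin> {x,y}) \<or> (a \<notin> {x,y} \<and> c \<notin> {x,y}) \<or> (b \<notin> {x,y} \<and> c \<notin> {x,y})"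
      using yn d by auto
    then show False using R inY abc(4) unfolding sep3_def by blast
  qed
  have xy: "x \<noteq> y" using ch by (auto simp: cherry_def)
  obtain z where z: "z \<in> {a,b,c}" "z \<notin> {x,y}"
  proof (cases "a \<notin> {x,y}")
    case True then show ?thesis using that by blast
  next
    case False
    show ?thesis
    proof (cases "b \<notin> {x,y}")
      case True then show ?thesis using that by blast
    next
      case False2: False
      then have "c \<notin> {x,y}" using False d by auto
      then show ?thesis using that by blast
    qed
  qed
  have "z \<in> Y" using z inY by auto
  moreover have "{x,y} \<in> T" "{x,z} \<in> T" "{y,z} \<in> T"
    using tri_pairs[OF abc(1-3)] xin yin z xy by auto
  ultimately show ?thesis using z by blast
qed

lemma cherry_Msup: assumes ch: "cherry Y x y u" and YX: "Y \<subseteq> X" and v: "v \<in> MM Y" and vu: "v \<noteq> u"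
  shows "v \<in> MM (Y - {x})"
proof -
  have cxy: "cm v x y" using cherry_other[OF ch YX v vu] .
  define f where "f = (\<lambda>q. if q = x then y else q)"
  have fc: "\<And>q. cm v q (f q)" using cxy cm_refl by (simp add: f_def)
  have fY: "\<And>q. q \<in> Y \<Longrightarrow> f q \<in> Y - {x}" using ch by (auto simp: f_def cherry_def)
  obtain a b c where abc: "a \<in> Y" "b \<in> Y" "c \<in> Y" "sep3 v a b c" using v by (auto simp: MM_def)
  have "sep3 v (f a) (f b) (f c)" using abc(4) fc unfolding sep3_def by (meson cm_sym cm_trans)
  then show ?thesis using fY abc v by (auto simp: MM_def)
qed

definition redT where "redT T x y = {p \<in> T. x \<notin> p} \<union> (\<lambda>a. {y,a}) ` {a. {x,a} \<in> T \<and> a \<noteq> y}"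
definition redC where "redC T x y = {a. {x,a} \<in> T \<and> a \<noteq> y \<and> {y,a} \<in> T}"

lemma red_card: assumes cv: "cov Y T" and fY: "finite Y" and xyT: "{x,y} \<in> T"
  shows "card T = card (redT T x y) + 1 + card (redC T x y)"
proof -
  define A where "A = {a. {x,a} \<in> T \<and> a \<noteq> y}"
  define T0 where "T0 = {p \<in> T. x \<notin> p}"
  define B where "B = (\<lambda>a. {y,a}) ` A"
  have fT: "finite T" using cov_fin[OF cv fY] .
  have xy: "x \<noteq> y" using cov_mem[OF cv xyT] by simp
  have AY: "A \<subseteq> Y" using cov_mem[OF cv] by (auto simp: A_def)
  have fA: "finite A" using AY fY finite_subset by blast
  have Ax: "\<And>a. a \<in> A \<Longrightarrow> a \<noteq> x \<and> a \<noteq> y" using cov_mem[OF cv] by (auto simp: A_def)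
  have T1: "{p \<in> T. x \<in> p} = insert {x,y} ((\<lambda>a. {x,a}) ` A)"
  proof
    show "{p \<in> T. x \<in> p} \<subseteq> insert {x,y} ((\<lambda>a. {x,a}) ` A)"
    proof
      fix p assume p: "p \<in> {p \<in> T. x \<in> p}"
      then obtain a b where ab: "p = {a,b}" "a \<noteq> b" using cv pairs_elem by (auto simp: cov_def) blast
      then have "p = {x, if a = x then b else a}" using p by auto
      then show "p \<in> insert {x,y} ((\<lambda>a. {x,a}) ` A)" using p by (auto simp: A_def)
    qed
  qed (use xyT in \<open>auto simp: A_def\<close>)
  have inj1: "inj_on (\<lambda>a. {x,a}) A" using Ax by (auto simp: inj_on_def doubleton_eq_iff)
  have nin1: "{x,y} \<notin> (\<lambda>a. {x,a}) ` A" using Ax by (auto simp: doubleton_eq_iff)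
  have cT1: "card {p \<in> T. x \<in> p} = 1 + card A"
    using T1 card_insert_disjoint[OF _ nin1] card_image[OF inj1] fA by simp
  have split: "T = T0 \<union> {p \<in> T. x \<in> p}" "T0 \<inter> {p \<in> T. x \<in> p} = {}" by (auto simp: T0_def)
  have cT: "card T = card T0 + 1 + card A"
    using card_Un_disjoint[of T0 "{p \<in> T. x \<in> p}"] split fT cT1 by (simp add: T0_def)
  have inj2: "inj_on (\<lambda>a. {y,a}) A" using Ax by (auto simp: inj_on_def doubleton_eq_iff)
  have cB: "card B = card A" using card_image[OF inj2] by (simp add: B_def)
  have int: "T0 \<inter> B = (\<lambda>a. {y,a}) ` (redC T x y)"
    using Ax xy by (auto simp: T0_def B_def A_def redC_def)
  have Csub: "redC T x y \<subseteq> A" by (auto simp: redC_def A_def)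
  have cI: "card (T0 \<inter> B) = card (redC T x y)"
    using int card_image[OF inj_on_subset[OF inj2 Csub]] by simp
  have fT0: "finite T0" using fT by (simp add: T0_def)
  have fB: "finite B" using fA by (simp add: B_def)
  have "card (T0 \<union> B) + card (T0 \<inter> B) = card T0 + card B" using card_Un_Int[OF fT0 fB] by simp
  moreover have "redT T x y = T0 \<union> B" by (simp add: redT_def T0_def B_def A_def)
  ultimately show ?thesis using cT cB cI by simp
qed

lemma red_cov: assumes ch: "cherry Y x y u" and cv: "cov Y T" and YX: "Y \<subseteq> X"
  shows "cov (Y - {x}) (redT T x y)"
  unfolding cov_def
proof (intro conjI ballI)
  have xy: "x \<noteq> y" "y \<in> Y" using ch by (auto simp: cherry_def)
  show "redT T x y \<subseteq> pairs (Y - {x})"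
  proof
    fix p assume p: "p \<in> redT T x y"
    show "p \<in> pairs (Y - {x})"
    proof (cases "p \<in> T \<and> x \<notin> p")
      case True
      then show ?thesis using cv by (auto simp: cov_def pairs_def)
    next
      case False
      then obtain a where a: "p = {y,a}" "{x,a} \<in> T" "a \<noteq> y" using p by (auto simp: redT_def)
      have "a \<in> Y" "a \<noteq> x" using cov_mem[OF cv a(2)] by auto
      then show ?thesis using a xy pairs_dbl[of y a "Y - {x}"] by auto
    qed
  qed
next
  fix v assume v: "v \<in> MM (Y - {x})"
  have vM: "v \<in> MM Y" "v \<noteq> u" using cherry_Msub[OF ch v] by auto
  have cxy: "cm v x y" using cherry_other[OF ch YX vM] .
  define f where "f = (\<lambda>q. if q = x then y else q)"
  have fc: "\<And>q. cm v q (f q)" using cxy cm_refl by (simp add: f_def)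
  obtain a b c where abc: "{a,b} \<in> T" "{a,c} \<in> T" "{b,c} \<in> T" "sep3 v a b c"
    using vM cv by (auto simp: cov_def)
  have s: "sep3 v (f a) (f b) (f c)" using abc(4) fc unfolding sep3_def by (meson cm_sym cm_trans)
  have pr: "\<And>p q. {p,q} \<in> T \<Longrightarrow> \<not> cm v (f p) (f q) \<Longrightarrow> {f p, f q} \<in> redT T x y"
  proof -
    fix p q assume pq: "{p,q} \<in> T" and n: "\<not> cm v (f p) (f q)"
    have fne: "f p \<noteq> f q" using n cm_refl by metis
    show "{f p, f q} \<in> redT T x y"
    proof (cases "p = x")
      case True
      then have "q \<noteq> x" "q \<noteq> y" using fne by (auto simp: f_def)
      then show ?thesis using True pq by (auto simp: redT_def f_def)
    next
      case False
      show ?thesis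
      proof (cases "q = x")
        case True
        then have "p \<noteq> y" using fne False by (auto simp: f_def)
        moreover have "{x,p} \<in> T" using pq True by (simp add: insert_commute)
        ultimately show ?thesis using True False by (auto simp: redT_def f_def insert_commute)
      next
        case False2: False
        then show ?thesis using False pq by (auto simp: redT_def f_def)
      qed
    qed
  qed
  have "{f a, f b} \<in> redT T x y" "{f a, f c} \<in> redT T x y" "{f b, f c} \<in> redT T x y"
    using pr abc s unfolding sep3_def by auto
  then show "\<exists>a b c. {a,b} \<in> redT T x y \<and> {a,c} \<in> redT T x y \<and> {b,c} \<in> redT T x y \<and> sep3 v a b c"
    using s by blast
qed

lemma red_deg: assumes cv: "cov Y T" and fY: "finite Y" and w: "w \<notin> {x,y}" "w \<notin> redC T x y"
  shows "multiplicity T w = multiplicity (redT T x y) w"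
proof -
  define S where "S = {p \<in> T. x \<notin> p \<and> w \<in> p}"
  have pT: "\<And>p. p \<in> T \<Longrightarrow> \<exists>a b. p = {a,b} \<and> a \<noteq> b" using cov_pair[OF cv] by blast
  have e1: "{p \<in> T. w \<in> p} = S \<union> (if {x,w} \<in> T then {{x,w}} else {})"
  proof
    show "{p \<in> T. w \<in> p} \<subseteq> S \<union> (if {x,w} \<in> T then {{x,w}} else {})"
    proof
      fix p assume p: "p \<in> {p \<in> T. w \<in> p}"
      show "p \<in> S \<union> (if {x,w} \<in> T then {{x,w}} else {})"
      proof (cases "x \<in> p")
        case True
        obtain a b where ab: "p = {a,b}" "a \<noteq> b" using pT p by blast
        have "p = {x,w}" using ab True p w by auto
        then show ?thesis using p by auto
      next
        case False then show ?thesis using p by (auto simp: S_def)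
      qed
    qed
  qed (auto simp: S_def)
  have e2: "{p \<in> redT T x y. w \<in> p} = S \<union> (if {x,w} \<in> T then {{y,w}} else {})"
    using w by (auto simp: S_def redT_def doubleton_eq_iff)
  have fS: "finite S"
  proof -
    have "S \<subseteq> T" by (auto simp: S_def)
    moreover have "finite T" using cov_fin[OF cv fY] .
    ultimately show ?thesis using finite_subset by blast
  qed
  show ?thesis
  proof (cases "{x,w} \<in> T")
    case True
    have n1: "{x,w} \<notin> S" by (simp add: S_def)
    have n2: "{y,w} \<notin> S" using True w by (auto simp: S_def redC_def)
    show ?thesis unfolding multiplicity_def e1 e2 using True n1 n2 fS by simp
  next
    case False
    show ?thesis unfolding multiplicity_def e1 e2 using False by simp
  qed
qed

end

lemma mult3: assumes "x \<noteq> y" "x \<noteq> z" "y \<noteq> z"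
  shows "multiplicity {{x,y},{x,z},{y,z}} z = 2"
proof -
  have "{p \<in> {{x,y},{x,z},{y,z}}. z \<in> p} = {{x,z},{y,z}}" using assms by auto
  moreover have "{x,z} \<noteq> {y,z}" using assms by (auto simp: doubleton_eq_iff)
  ultimately show ?thesis by (simp add: multiplicity_def)
qed

context bt begin

lemma tri_perm: assumes "{p,q}\<in>T" "{p,r}\<in>T" "{q,r}\<in>T" "sep3 v p q r"
  "w \<in> {p,q,r}" "a \<in> {p,q,r}" "b \<in> {p,q,r}" "w \<noteq> a" "w \<noteq> b" "a \<noteq> b"
  shows "{w,a}\<in>T \<and> {w,b}\<in>T \<and> {a,b}\<in>T \<and> sep3 v w a b"
  using tri_pairs[OF assms(1-3)] tri_sep[OF assms(4)] assms(5-10) unfolding sep3_def by metis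

lemma nbrs: assumes cv: "cov Y T" and fY: "finite Y" and YX: "Y \<subseteq> X" and c3: "3 \<le> card Y" and wY: "w \<in> Y"
  shows "\<exists>v0 a b. v0 \<in> MM Y \<and> (\<forall>q\<in>Y. q \<noteq> w \<longrightarrow> \<not> cm v0 w q) \<and> {w,a}\<in>T \<and> {w,b}\<in>T \<and> {a,b}\<in>T \<and> sep3 v0 w a b"
proof -
  obtain v0 where v0: "v0 \<in> MM Y" "\<forall>q\<in>Y. q \<noteq> w \<longrightarrow> \<not> cm v0 w q" using RP[OF fY YX c3 wY] by blast
  obtain p q r where pqr: "{p,q}\<in>T" "{p,r}\<in>T" "{q,r}\<in>T" "sep3 v0 p q r"
    using v0(1) cv by (auto simp: cov_def)
  have inY: "p \<in> Y" "q \<in> Y" "r \<in> Y" using pqr cov_mem[OF cv] by auto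
  have d: "p \<noteq> q" "p \<noteq> r" "q \<noteq> r" using sep3_dist[OF pqr(4)] by auto
  have v0VX: "v0 \<in> V - X" using v0(1) by (auto simp: MM_def)
  have win: "w \<in> {p,q,r}"
  proof (rule ccontr)
    assume n: "w \<notin> {p,q,r}"
    have "\<not> cm v0 w p" "\<not> cm v0 w q" "\<not> cm v0 w r" using v0(2) n inY by auto
    then show False using four_X[OF v0VX] wY inY YX pqr(4) unfolding sep3_def by blast
  qed
  show ?thesis
  proof (cases "w = p")
    case True
    then show ?thesis using tri_perm[OF pqr, of w q r] v0 d by auto
  next
    case False
    show ?thesis
    proof (cases "w = q")
      case True
      then show ?thesis using tri_perm[OF pqr, of w p r] v0 d by auto
    next
      case False2: False
      then have "w = r" using win False by auto
      then show ?thesis using tri_perm[OF pqr, of w p q] v0 d by auto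
    qed
  qed
qed

lemma mult_ge2: assumes cv: "cov Y T" and fY: "finite Y" and YX: "Y \<subseteq> X" and c3: "3 \<le> card Y" and wY: "w \<in> Y"
  shows "2 \<le> multiplicity T w"
proof -
  obtain v0 a b where ab: "{w,a}\<in>T" "{w,b}\<in>T" "sep3 v0 w a b" using nbrs[OF assms] by blast
  have "a \<noteq> b" using sep3_dist[OF ab(3)] by simp
  then have "{w,a} \<noteq> {w,b}" by (auto simp: doubleton_eq_iff)
  then have "card {{w,a},{w,b}} = 2" by simp
  moreover have "{{w,a},{w,b}} \<subseteq> {p \<in> T. w \<in> p}" using ab by auto
  moreover have "finite {p \<in> T. w \<in> p}" using cov_fin[OF cv fY] by simp
  ultimately show ?thesis unfolding multiplicity_def by (metis card_mono)
qed

lemma removal: assumes cv: "cov Y T" and fY: "finite Y" and YX: "Y \<subseteq> X" and c3: "3 \<le> card Y" and wY: "w \<in> Y"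
  and m2: "multiplicity T w = 2"
  shows "\<exists>a b. {p \<in> T. w \<in> p} = {{w,a},{w,b}} \<and> {a,b} \<in> T \<and> a \<noteq> b \<and> a \<noteq> w \<and> b \<noteq> w \<and>
     cov (Y - {w}) {p \<in> T. w \<notin> p}"
proof -
  obtain v0 a b where nb: "v0 \<in> MM Y" "\<forall>q\<in>Y. q \<noteq> w \<longrightarrow> \<not> cm v0 w q" "{w,a}\<in>T" "{w,b}\<in>T" "{a,b}\<in>T" "sep3 v0 w a b"
    using nbrs[OF cv fY YX c3 wY] by blast
  have d: "w \<noteq> a" "w \<noteq> b" "a \<noteq> b" using sep3_dist[OF nb(6)] by auto
  have fT: "finite T" using cov_fin[OF cv fY] .
  have sub: "{{w,a},{w,b}} \<subseteq> {p \<in> T. w \<in> p}" using nb by auto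
  have c2: "card {{w,a},{w,b}} = 2" using d by (auto simp: doubleton_eq_iff)
  have eq: "{p \<in> T. w \<in> p} = {{w,a},{w,b}}"
    using card_subset_eq[OF _ sub] fT c2 m2 by (simp add: multiplicity_def)
  have v0VX: "v0 \<in> V - X" using nb(1) by (auto simp: MM_def)
  have YV: "Y \<subseteq> V" using YX XV by auto
  have wV: "w \<in> V" "a \<in> V" "b \<in> V" using wY YV cov_mem[OF cv nb(3)] cov_mem[OF cv nb(4)] by auto
  have cv1: "cov (Y - {w}) {p \<in> T. w \<notin> p}"
    unfolding cov_def
  proof (intro conjI ballI)
    show "{p \<in> T. w \<notin> p} \<subseteq> pairs (Y - {w})"
      using cv by (auto simp: cov_def pairs_def)
  next
    fix v assume v: "v \<in> MM (Y - {w})"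
    have vY: "v \<in> MM Y" using v MM_mono[of "Y - {w}" Y] by auto
    obtain p q r where pqr: "{p,q}\<in>T" "{p,r}\<in>T" "{q,r}\<in>T" "sep3 v p q r"
      using vY cv by (auto simp: cov_def)
    have dd: "p \<noteq> q" "p \<noteq> r" "q \<noteq> r" using sep3_dist[OF pqr(4)] by auto
    show "\<exists>a b c. {a,b} \<in> {p \<in> T. w \<notin> p} \<and> {a,c} \<in> {p \<in> T. w \<notin> p} \<and> {b,c} \<in> {p \<in> T. w \<notin> p} \<and> sep3 v a b c"
    proof (cases "w \<in> {p,q,r}")
      case False
      then show ?thesis using pqr by auto
    next
      case True
      obtain s t where st: "s \<in> {p,q,r}" "t \<in> {p,q,r}" "s \<noteq> t" "s \<noteq> w" "t \<noteq> w"
        using True dd by (metis insert_iff)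
      have tp: "{w,s}\<in>T \<and> {w,t}\<in>T \<and> {s,t}\<in>T \<and> sep3 v w s t"
        using tri_perm[OF pqr True st(1,2)] st by auto
      have "{w,s} \<in> {p \<in> T. w \<in> p}" "{w,t} \<in> {p \<in> T. w \<in> p}" using tp by auto
      then have "{w,s} \<in> {{w,a},{w,b}}" "{w,t} \<in> {{w,a},{w,b}}" using eq by simp_all
      then have "s = a \<or> s = b" "t = a \<or> t = b" using st(4,5) by (auto simp: doubleton_eq_iff)
      then have "(s = a \<and> t = b) \<or> (s = b \<and> t = a)" using st(3) by auto
      then have "sep3 v w a b" using tp unfolding sep3_def by (auto dest: cm_sym)
      then have "v = v0" using med_unique[of v v0 w a b] v0VX vY wV nb(6) by (auto simp: MM_def)
      then obtain a' b' c' where abc: "a' \<in> Y - {w}" "b' \<in> Y - {w}" "c' \<in> Y - {w}" "sep3 v0 a' b' c'"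
        using v by (auto simp: MM_def)
      have "\<not> cm v0 w a'" "\<not> cm v0 w b'" "\<not> cm v0 w c'" using nb(2) abc by auto
      then show ?thesis using four_X[OF v0VX] wY abc YX unfolding sep3_def by blast
    qed
  qed
  show ?thesis using eq nb(5) d cv1 by blast
qed

lemma lower: "finite Y \<Longrightarrow> Y \<subseteq> X \<Longrightarrow> 3 \<le> card Y \<Longrightarrow> cov Y T \<Longrightarrow> 2 * card Y \<le> card T + 3"
proof (induction "card Y" arbitrary: Y T rule: less_induct)
  case less
  obtain x y u where ch: "cherry Y x y u" using cherry_ex less.prems by blast
  obtain z where z: "z \<in> Y" "z \<notin> {x,y}" "{x,y} \<in> T" "{x,z} \<in> T" "{y,z} \<in> T"
    using cherry_tri[OF ch less.prems(4,1,3)] by blast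
  have xy: "x \<noteq> y" "x \<in> Y" "y \<in> Y" using ch by (auto simp: cherry_def)
  have fT: "finite T" using cov_fin less.prems by blast
  show ?case
  proof (cases "card Y = 3")
    case True
    have "card {{x,y},{x,z},{y,z}} = 3" using xy z by (auto simp: doubleton_eq_iff card_insert_if)
    moreover have "{{x,y},{x,z},{y,z}} \<subseteq> T" using z by auto
    ultimately have "3 \<le> card T" using card_mono[OF fT] by metis
    then show ?thesis using True by simp
  next
    case False
    have c4: "4 \<le> card Y" using False less.prems(3) by simp
    have cY': "card (Y - {x}) = card Y - 1" using xy less.prems(1) by simp
    have cv': "cov (Y - {x}) (redT T x y)" using red_cov[OF ch less.prems(4,2)] .
    have "2 * card (Y - {x}) \<le> card (redT T x y) + 3"
      apply (rule less.hyps[of "Y - {x}"])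
      using cY' c4 less.prems cv' by auto
    moreover have "card T = card (redT T x y) + 1 + card (redC T x y)"
      using red_card[OF less.prems(4,1) z(3)] .
    moreover have "1 \<le> card (redC T x y)"
    proof -
      have "redC T x y \<subseteq> Y" using cov_mem[OF less.prems(4)] by (auto simp: redC_def)
      then have "finite (redC T x y)" using less.prems(1) finite_subset by blast
      moreover have "z \<in> redC T x y" using z by (auto simp: redC_def insert_commute)
      ultimately show ?thesis by (metis One_nat_def Suc_leI card_gt_0_iff empty_iff)
    qed
    ultimately show ?thesis using cY' c4 by simp
  qed
qed

lemma pairs_mono: "A \<subseteq> B \<Longrightarrow> pairs A \<subseteq> pairs B" by (auto simp: pairs_def)

lemma construct: "finite Y \<Longrightarrow> Y \<subseteq> X \<Longrightarrow> 3 \<le> card Y \<Longrightarrow> \<exists>T. cov Y T \<and> card T + 3 = 2 * card Y"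
proof (induction "card Y" arbitrary: Y rule: less_induct)
  case less
  obtain x y u where ch: "cherry Y x y u" using cherry_ex less.prems by blast
  have xy: "x \<noteq> y" "x \<in> Y" "y \<in> Y" using ch by (auto simp: cherry_def)
  show ?case
  proof (cases "card Y = 3")
    case True
    have "cov Y (pairs Y)"
      unfolding cov_def
    proof (intro conjI ballI)
      fix v assume "v \<in> MM Y"
      then obtain a b c where abc: "a \<in> Y" "b \<in> Y" "c \<in> Y" "sep3 v a b c" by (auto simp: MM_def)
      then have "a \<noteq> b" "a \<noteq> c" "b \<noteq> c" using sep3_dist by auto
      then have "{a,b} \<in> pairs Y" "{a,c} \<in> pairs Y" "{b,c} \<in> pairs Y" using abc by (simp_all add: pairs_dbl)
      then show "\<exists>a b c. {a,b} \<in> pairs Y \<and> {a,c} \<in> pairs Y \<and> {b,c} \<in> pairs Y \<and> sep3 v a b c"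
        using abc(4) by blast
    qed simp
    moreover have "card (pairs Y) = 3"
      using n_subsets[OF less.prems(1), of 2] True by (simp add: pairs_def choose_two)
    ultimately show ?thesis using True by auto
  next
    case False
    have c4: "4 \<le> card Y" using False less.prems(3) by simp
    have cY': "card (Y - {x}) = card Y - 1" using xy less.prems(1) by simp
    have fY': "finite (Y - {x})" using less.prems(1) by simp
    have YX': "Y - {x} \<subseteq> X" using less.prems(2) by auto
    have c3': "3 \<le> card (Y - {x})" using cY' c4 by simp
    obtain T' where T': "cov (Y - {x}) T'" "card T' + 3 = 2 * card (Y - {x})"
      using less.hyps[of "Y - {x}"] cY' c4 less.prems fY' YX' c3' by auto
    have yY': "y \<in> Y - {x}" using xy by auto
    obtain v0 c c2 where yc: "{y,c} \<in> T'" "sep3 v0 y c c2" using nbrs[OF T'(1) fY' YX' c3' yY'] by blast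
    have cY: "c \<in> Y - {x}" "c \<noteq> y" using cov_mem[OF T'(1) yc(1)] by auto
    define T where "T = insert {x,y} (insert {x,c} T')"
    have n1: "{x,c} \<notin> T'" using cov_mem[OF T'(1), of x c] by auto
    have n2: "{x,y} \<notin> insert {x,c} T'" using cov_mem[OF T'(1), of x y] cY by (auto simp: doubleton_eq_iff)
    have fT': "finite T'" using cov_fin[OF T'(1) fY'] .
    have cT: "card T = card T' + 2" using n1 n2 fT' by (simp add: T_def)
    have cv: "cov Y T"
      unfolding cov_def
    proof (intro conjI ballI)
      show "T \<subseteq> pairs Y"
      proof -
        have "{x,y} \<in> pairs Y" "{x,c} \<in> pairs Y" using cY xy by (auto simp add: pairs_dbl)
        then show ?thesis using T'(1) pairs_mono[of "Y - {x}" Y] by (auto simp: T_def cov_def)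
      qed
    next
      fix v assume v: "v \<in> MM Y"
      show "\<exists>a b c. {a,b} \<in> T \<and> {a,c} \<in> T \<and> {b,c} \<in> T \<and> sep3 v a b c"
      proof (cases "v = u")
        case True
        have "sep3 u x y c" using ch cY xy unfolding cherry_def sep3_def by auto
        then show ?thesis using True yc by (auto simp: T_def)
      next
        case False
        have "v \<in> MM (Y - {x})" using cherry_Msup[OF ch less.prems(2) v False] .
        then obtain a b d where "{a,b} \<in> T'" "{a,d} \<in> T'" "{b,d} \<in> T'" "sep3 v a b d"
          using T'(1) by (auto simp: cov_def)
        then show ?thesis by (auto simp: T_def)
      qed
    qed
    show ?thesis using cv cT T'(2) cY' c4 by auto
  qed
qed

end

context bt begin

definition HH where "HH Y T \<longleftrightarrow> (\<forall>p\<in>T. \<exists>w\<in>Y. w \<notin> p \<and> multiplicity T w = 2)"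

lemma tight: "finite Y \<Longrightarrow> Y \<subseteq> X \<Longrightarrow> 3 \<le> card Y \<Longrightarrow> cov Y T \<Longrightarrow> card T + 3 = 2 * card Y \<Longrightarrow> HH Y T"
proof (induction "card Y" arbitrary: Y T rule: less_induct)
  case less
  obtain x y u where ch: "cherry Y x y u" using cherry_ex less.prems by blast
  obtain z where z: "z \<in> Y" "z \<notin> {x,y}" "{x,y} \<in> T" "{x,z} \<in> T" "{y,z} \<in> T"
    using cherry_tri[OF ch less.prems(4,1,3)] by blast
  have xy: "x \<noteq> y" "x \<in> Y" "y \<in> Y" using ch by (auto simp: cherry_def)
  have fT: "finite T" using cov_fin less.prems by blast
  show ?case
  proof (cases "card Y = 3")
    case True
    have sub: "{{x,y},{x,z},{y,z}} \<subseteq> T" using z by auto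
    have "card {{x,y},{x,z},{y,z}} = 3" using xy z by (auto simp: doubleton_eq_iff card_insert_if)
    then have Teq: "T = {{x,y},{x,z},{y,z}}" using card_subset_eq[OF fT sub] True less.prems(5) by simp
    have d: "x \<noteq> y" "x \<noteq> z" "y \<noteq> z" using xy z by auto
    have mz: "multiplicity T z = 2" using mult3[OF d] Teq by simp
    have my: "multiplicity T y = 2"
    proof -
      have "T = {{x,z},{x,y},{z,y}}" using Teq by (auto simp: insert_commute)
      then show ?thesis using mult3[of x z y] d by auto
    qed
    have mx: "multiplicity T x = 2"
    proof -
      have "T = {{y,z},{y,x},{z,x}}" using Teq by (auto simp: insert_commute)
      then show ?thesis using mult3[of y z x] d by auto
    qed
    show ?thesis unfolding HH_def
    proof
      fix p assume "p \<in> T"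
      then have "p = {x,y} \<or> p = {x,z} \<or> p = {y,z}" using Teq by auto
      then show "\<exists>w\<in>Y. w \<notin> p \<and> multiplicity T w = 2" using mx my mz d xy z by auto
    qed
  next
    case False
    have c4: "4 \<le> card Y" using False less.prems(3) by simp
    have cY': "card (Y - {x}) = card Y - 1" using xy less.prems(1) by simp
    have fY': "finite (Y - {x})" using less.prems(1) by simp
    have YX': "Y - {x} \<subseteq> X" using less.prems(2) by auto
    have c3': "3 \<le> card (Y - {x})" using cY' c4 by simp
    have cv': "cov (Y - {x}) (redT T x y)" using red_cov[OF ch less.prems(4,2)] .
    have lb: "2 * card (Y - {x}) \<le> card (redT T x y) + 3" using lower[OF fY' YX' c3' cv'] .
    have cc: "card T = card (redT T x y) + 1 + card (redC T x y)"
      using red_card[OF less.prems(4,1) z(3)] .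
    have CY: "redC T x y \<subseteq> Y" using cov_mem[OF less.prems(4)] by (auto simp: redC_def)
    have fC: "finite (redC T x y)" using CY less.prems(1) finite_subset by blast
    have zC: "z \<in> redC T x y" using z by (auto simp: redC_def insert_commute)
    have cC: "card (redC T x y) \<le> 1" using lb cc cY' c4 less.prems(5) by simp
    have Ceq: "redC T x y = {z}" using cC zC fC card_le_Suc0_iff_eq by fastforce
    have tight': "card (redT T x y) + 3 = 2 * card (Y - {x})" using cc cC zC Ceq cY' c4 less.prems(5) by simp
    have H': "HH (Y - {x}) (redT T x y)"
      apply (rule less.hyps[of "Y - {x}"])
      using cY' c4 less.prems fY' YX' c3' cv' tight' by auto
    have yzT': "{y,z} \<in> redT T x y" using z xy by (auto simp: redT_def)
    obtain w where w: "w \<in> Y - {x}" "w \<notin> {y,z}" "multiplicity (redT T x y) w = 2"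
      using H' yzT' unfolding HH_def by blast
    have mw: "multiplicity T w = 2"
      using red_deg[OF less.prems(4,1), of w x y] w Ceq by auto
    have wY: "w \<in> Y" using w by auto
    obtain a b where ab: "{p \<in> T. w \<in> p} = {{w,a},{w,b}}" "{a,b} \<in> T" "a \<noteq> b" "a \<noteq> w" "b \<noteq> w"
      "cov (Y - {w}) {p \<in> T. w \<notin> p}"
      using removal[OF less.prems(4,1,2,3) wY mw] by blast
    define T1 where "T1 = {p \<in> T. w \<notin> p}"
    have Tu: "T = T1 \<union> {p \<in> T. w \<in> p}" by (auto simp: T1_def)
    have Td: "T1 \<inter> {p \<in> T. w \<in> p} = {}" by (auto simp: T1_def)
    have fT1: "finite T1" using fT by (simp add: T1_def)
    have fT2: "finite {p \<in> T. w \<in> p}" using fT by simp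
    have "card T = card T1 + card {p \<in> T. w \<in> p}"
      using card_Un_disjoint[OF fT1 fT2 Td] Tu by simp
    then have cT1: "card T = card T1 + 2" using mw by (simp add: multiplicity_def)
    have cYw: "card (Y - {w}) = card Y - 1" using wY less.prems(1) by simp
    have H1: "HH (Y - {w}) T1"
      apply (rule less.hyps[of "Y - {w}"])
      using cYw c4 less.prems ab(6) cT1 by (auto simp: T1_def)
    show ?thesis unfolding HH_def
    proof
      fix p assume pT: "p \<in> T"
      show "\<exists>w\<in>Y. w \<notin> p \<and> multiplicity T w = 2"
      proof (cases "w \<in> p")
        case False
        then show ?thesis using wY mw by blast
      next
        case True
        then have "p \<in> {{w,a},{w,b}}" using ab(1) pT by blast
        have abT1: "{a,b} \<in> T1" using ab by (auto simp: T1_def)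
        obtain w' where w': "w' \<in> Y - {w}" "w' \<notin> {a,b}" "multiplicity T1 w' = 2"
          using H1 abT1 unfolding HH_def by blast
        have "{q \<in> T. w' \<in> q} = {q \<in> T1. w' \<in> q}"
        proof
          show "{q \<in> T. w' \<in> q} \<subseteq> {q \<in> T1. w' \<in> q}"
          proof
            fix q assume q: "q \<in> {q \<in> T. w' \<in> q}"
            show "q \<in> {q \<in> T1. w' \<in> q}"
            proof (cases "w \<in> q")
              case True
              then have "q \<in> {{w,a},{w,b}}" using ab(1) q by blast
              then show ?thesis using q w' by auto
            next
              case False
              then show ?thesis using q by (auto simp: T1_def)
            qed
          qed
        qed (auto simp: T1_def)
        then have "multiplicity T w' = 2" using w'(3) by (simp add: multiplicity_def)
        moreover have "w' \<notin> p" using \<open>p \<in> {{w,a},{w,b}}\<close> w' by auto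
        ultimately show ?thesis using w' by blast
      qed
    qed
  qed
qed

end

theorem corollary2:
  fixes X :: "'a set" and \<T> :: "'a set set"
  assumes "finite X" and "card X \<ge> 3"
    and "\<exists>V E. binary_phylo_tree X V E \<and> min_triplet_cover X V E \<T>"
  shows "mu X \<T> = 2"
proof -
  obtain V E where bp: "binary_phylo_tree X V E" and mn: "min_triplet_cover X V E \<T>" using assms(3) by blast
  interpret bt X V E using bp by (simp add: bt_def)
  have tc: "triplet_cover X V E \<T>" using mn by (simp add: min_triplet_cover_def)
  have Tsub: "\<T> \<subseteq> pairs X" using tc by (simp add: triplet_cover_def)
  have sup: "\<forall>v\<in>V - X. \<exists>a b c. supports V E \<T> a b c v" using tc by (simp add: triplet_cover_def)
  have VXM: "V - X \<subseteq> MM X"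
  proof
    fix v assume v: "v \<in> V - X"
    then obtain a b c where s: "supports V E \<T> a b c v" using sup by blast
    then have "{a,b} \<in> \<T>" "{a,c} \<in> \<T>" by (auto simp: supports_def)
    then have "{a,b} \<in> pairs X" "{a,c} \<in> pairs X" using Tsub by auto
    then have "a \<in> X" "b \<in> X" "c \<in> X" by (simp_all add: pairs_dbl)
    moreover have "sep3 v a b c" using s by (simp add: supports_def sep3_def)
    ultimately show "v \<in> MM X" using v by (auto simp: MM_def)
  qed
  have cv: "cov X \<T>"
    unfolding cov_def
  proof (intro conjI ballI)
    show "\<T> \<subseteq> pairs X" using Tsub .
  next
    fix v assume "v \<in> MM X"
    then have "v \<in> V - X" by (simp add: MM_def)
    then obtain a b c where s: "supports V E \<T> a b c v" using sup by blast
    then show "\<exists>a b c. {a,b} \<in> \<T> \<and> {a,c} \<in> \<T> \<and> {b,c} \<in> \<T> \<and> sep3 v a b c"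
      by (auto simp: supports_def sep3_def)
  qed
  have XX: "X \<subseteq> X" by simp
  obtain T0 where T0: "cov X T0" "card T0 + 3 = 2 * card X" using construct[OF assms(1) XX assms(2)] by blast
  have tc0: "triplet_cover X V E T0"
    unfolding triplet_cover_def
  proof (intro conjI ballI)
    show "T0 \<subseteq> pairs X" using T0(1) by (simp add: cov_def)
  next
    fix v assume v: "v \<in> V - X"
    then have "v \<in> MM X" using VXM by blast
    then obtain a b c where abc: "{a,b} \<in> T0" "{a,c} \<in> T0" "{b,c} \<in> T0" "sep3 v a b c"
      using T0(1) by (auto simp: cov_def)
    have "a \<in> X" "b \<in> X" "c \<in> X" using abc cov_mem[OF T0(1)] by auto
    then have "a \<in> V - {v}" "b \<in> V - {v}" "c \<in> V - {v}" using v XV by auto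
    then show "\<exists>a b c. supports V E T0 a b c v" using abc by (auto simp: supports_def sep3_def)
  qed
  have "card \<T> \<le> card T0" using mn tc0 by (simp add: min_triplet_cover_def)
  moreover have "2 * card X \<le> card \<T> + 3" using lower[OF assms(1) XX assms(2) cv] .
  ultimately have tgt: "card \<T> + 3 = 2 * card X" using T0(2) by simp
  have H: "HH X \<T>" using tight[OF assms(1) XX assms(2) cv tgt] .
  have "\<T> \<noteq> {}" using tgt assms(2) by auto
  then obtain p where "p \<in> \<T>" by blast
  then obtain w where w: "w \<in> X" "multiplicity \<T> w = 2" using H unfolding HH_def by blast
  have ge: "\<And>q. q \<in> X \<Longrightarrow> 2 \<le> multiplicity \<T> q" using mult_ge2[OF cv assms(1) XX assms(2)] by blast
  have fin: "finite (multiplicity \<T> ` X)" using assms(1) by simp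
  have ne: "multiplicity \<T> ` X \<noteq> {}" using w by blast
  have "Min (multiplicity \<T> ` X) \<le> 2" using Min_le[OF fin] w by (metis imageI)
  moreover have "2 \<le> Min (multiplicity \<T> ` X)" using Min_ge_iff[OF fin ne] ge by auto
  ultimately show ?thesis by (simp add: mu_def)
qed

end
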